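(* Let $U_1,U_2,\dots$ be i.i.d. almost surely positive random variables distributed as $U$ with tail function $Q(x)=\mathbb{P}(U>x)$, and assume $\mathbb{E}[U^2]<\infty$ and that there exist $\beta\in(0,1/2)$ and $x_0>0$ in the interior of the support of $U$ such that $Q^{1/2-\beta}$ is convex on $[x_0,\infty)$. Let $V_1\le\dots\le V_N$ be the order statistics of $(U_1,\dots,U_N)$ and \[D_N=\Big\{V_{N-1}\le V_N\Big(1-\Big(\frac{V_{N-1}}{\sqrt N}\Big)^{1-\beta}\Big)\Big\}.\] Then $\mathbb{P}(D_N)\to1$ as $N\to\infty$. *)

theory Defs
  imports "HOL-Probability.Probability"
begin

definition rv_support :: "'a measure \<Rightarrow> ('a \<Rightarrow> real) \<Rightarrow> real set" where
  "rv_support M X = {x. \<forall>e>0. measure M {\<omega> \<in> space M. X \<omega> \<in> ball x e} > 0}"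

definition tail_fun :: "'a measure \<Rightarrow> ('a \<Rightarrow> real) \<Rightarrow> real \<Rightarrow> real" where
  "tail_fun M X x = measure M {\<omega> \<in> space M. X \<omega> > x}"

text \<open>k-th order statistic (1-based, increasing) of U 0, ..., U (N-1) at \<omega>;
so order_stat U N N is the maximum and order_stat U N (N-1) the second largest.\<close>
definition order_stat :: "(nat \<Rightarrow> 'a \<Rightarrow> real) \<Rightarrow> nat \<Rightarrow> nat \<Rightarrow> 'a \<Rightarrow> real" where
  "order_stat U N k \<omega> = sort (map (\<lambda>i. U i \<omega>) [0..<N]) ! (k - 1)"

end

theory Submission
  imports Defs "HOL-Real_Asymp.Real_Asymp"
begin

lemma sorted_nth_le_iff:
  fixes ys :: "real list"
  shows "sorted ys \<Longrightarrow> m < length ys \<Longrightarrow> (ys!m \<le> a) \<longleftrightarrow> m < length (filter (\<lambda>x. x \<le> a) ys)"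
proof (induction ys arbitrary: m)
  case Nil then show ?case by simp
next
  case (Cons y ys)
  show ?case
  proof (cases "y \<le> a")
    case True
    then show ?thesis using Cons by (cases m) auto
  next
    case False
    then have "filter (\<lambda>x. x \<le> a) (y#ys) = []" using Cons.prems(1)
      by (auto simp: filter_empty_conv)
    moreover have "(y#ys)!m > a" using Cons.prems False
      by (cases m) (auto, meson dual_order.trans nth_mem not_le)
    ultimately show ?thesis by simp
  qed
qed

lemma order_stat_le_iff:
  assumes "1 \<le> k" "k \<le> N"
  shows "order_stat U N k \<omega> \<le> a \<longleftrightarrow> k \<le> card {i. i < N \<and> U i \<omega> \<le> a}"
proof -
  define xs where "xs = map (\<lambda>i. U i \<omega>) [0..<N]"
  have "order_stat U N k \<omega> \<le> a \<longleftrightarrow> k - 1 < length (filter (\<lambda>x. x \<le> a) (sort xs))"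
    unfolding order_stat_def xs_def[symmetric]
    by (rule sorted_nth_le_iff) (use assms in \<open>auto simp: xs_def\<close>)
  also have "length (filter (\<lambda>x. x \<le> a) (sort xs)) = length (filter (\<lambda>x. x \<le> a) xs)"
    by (metis mset_filter mset_sort size_mset)
  also have "\<dots> = card {i. i < N \<and> U i \<omega> \<le> a}"
    unfolding length_filter_conv_card by (auto simp: xs_def intro!: arg_cong[where f=card])
  finally show ?thesis using assms by linarith
qed

lemma order_stat_indices:
  assumes "2 \<le> N"
  obtains i j where "i < N" "j < N" "i \<noteq> j" "order_stat U N N \<omega> = U i \<omega>"
    "order_stat U N (N-1) \<omega> = U j \<omega>" "U j \<omega> \<le> U i \<omega>"
proof -
  define xs where "xs = map (\<lambda>i. U i \<omega>) [0..<N]"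
  have "mset (sort xs) = mset xs" by simp
  then obtain p where p: "p permutes {..<length xs}" "permute_list p xs = sort xs"
    by (rule mset_eq_permutation)
  have lx: "length xs = N" by (simp add: xs_def)
  have nth: "sort xs ! k = U (p k) \<omega>" if "k < N" for k
    using permute_list_nth[OF p(1), of k] p(2) that lx permutes_in_image[OF p(1), of k]
    by (auto simp: xs_def)
  have pk: "p k < N" if "k < N" for k using permutes_in_image[OF p(1), of k] that lx by auto
  have ne: "N-1 \<noteq> N-2" using assms by arith
  have inj: "p (N-1) \<noteq> p (N-2)" using permutes_inj[OF p(1)] ne
    by (auto dest: injD)
  have sorted: "sort xs ! (N-2) \<le> sort xs ! (N-1)"
    by (rule sorted_nth_mono) (use assms lx in auto)
  have o1: "order_stat U N N \<omega> = sort xs ! (N-1)" by (simp add: order_stat_def xs_def)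
  have o2: "order_stat U N (N-1) \<omega> = sort xs ! (N-2)"
    by (simp add: order_stat_def xs_def diff_diff_left numeral_2_eq_2)
  have "N-1 < N" "N-2 < N" using assms by auto
  then show ?thesis
    using that[of "p (N-1)" "p (N-2)"] pk[of "N-1"] pk[of "N-2"] inj nth[of "N-1"] nth[of "N-2"] sorted o1 o2
    by simp
qed


lemma card_le_sum: "real (card {i. i < (N::nat) \<and> P i}) = (\<Sum>i<N. if P i then 1 else 0)"
proof -
  have "{i. i < N \<and> P i} = {i\<in>{..<N}. P i}" by auto
  moreover have "(\<Sum>i<N. if P i then 1 else 0::real) = (\<Sum>i\<in>{i\<in>{..<N}. P i}. 1)"
    using sum.inter_filter[of "{..<N}" "\<lambda>_. 1::real" P] by (simp add: eq_commute)
  ultimately show ?thesis by simp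
qed

lemma powr_diff_bound:
  fixes u v p :: real
  assumes "0 \<le> v" "v \<le> u" "1 \<le> p"
  shows "u powr p - v powr p \<le> p * u powr (p - 1) * (u - v)"
proof (cases "v = 0")
  case True
  show ?thesis
  proof (cases "u = 0")
    case True then show ?thesis using \<open>v = 0\<close> by simp
  next
    case False
    then have u: "u > 0" using assms by simp
    have "u powr p = u powr (p - 1) * u" using u by (simp add: powr_diff)
    also have "\<dots> \<le> p * u powr (p - 1) * u" using u assms by (simp add: mult_right_mono)
    finally show ?thesis using \<open>v = 0\<close> by simp
  qed
next
  case False
  then have v: "v > 0" using assms by simp
  show ?thesis
  proof (cases "v = u")
    case True then show ?thesis by simp
  next
    case False
    then have vu: "v < u" using assms by simp
    have "\<exists>z. v < z \<and> z < u \<and> u powr p - v powr p = (u - v) * (p * z powr (p - 1))"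
      by (rule MVT2[OF vu]) (use v in \<open>auto intro!: derivative_eq_intros\<close>)
    then obtain z where z: "v < z" "z < u" "u powr p - v powr p = (u - v) * (p * z powr (p - 1))"
      by blast
    have "z powr (p - 1) \<le> u powr (p - 1)" using z v assms by (intro powr_mono2) auto
    then have "(u - v) * (p * z powr (p - 1)) \<le> (u - v) * (p * u powr (p - 1))"
      using vu assms by (intro mult_left_mono) auto
    then show ?thesis using z by (simp add: algebra_simps)
  qed
qed

lemma convex_slope:
  fixes g :: "real \<Rightarrow> real"
  assumes conv: "convex_on S g" and S: "a \<in> S" "y + h \<in> S" and ay: "a < y" and h: "0 \<le> h"
  shows "(y - a) * (g y - g (y + h)) \<le> h * (g a - g y)"
proof -
  define D where "D = y + h - a"
  have D: "D > 0" unfolding D_def using ay h by simp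
  define t where "t = (y - a) / D"
  have t: "0 \<le> t" "t \<le> 1" unfolding t_def D_def using ay h by auto
  have tD: "t * D = y - a" unfolding t_def using D by simp
  have "(1 - t) *\<^sub>R a + t *\<^sub>R (y + h) = a + t * D"
    unfolding D_def by (simp add: algebra_simps)
  then have "(1 - t) *\<^sub>R a + t *\<^sub>R (y + h) = y" using tD by simp
  then have "g y \<le> (1 - t) * g a + t * g (y + h)"
    using convex_onD[OF conv t S] by simp
  then have "D * g y \<le> D * ((1 - t) * g a + t * g (y + h))"
    using D by (simp add: mult_left_mono)
  also have "D * ((1 - t) * g a + t * g (y + h)) = D * g a - (t * D) * g a + (t * D) * g (y + h)"
    by (simp add: algebra_simps)
  also have "\<dots> = h * g a + (y - a) * g (y + h)"
    unfolding tD unfolding D_def by (simp add: algebra_simps)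
  finally show ?thesis unfolding D_def by (simp add: algebra_simps)
qed

lemma alg:
  fixes y N K B P \<kappa> \<beta> :: real
  assumes y: "y > 0" and N: "N > 0" and K: "K > 0" and B: "B > 0" and kap: "\<kappa> > 0"
  defines "r \<equiv> y / sqrt N"
  shows "P * (K/N) powr (1/2+\<beta>) * (2*y*r powr (1-\<beta>)) * (B/y^2) powr (1/2-\<beta>) / (\<kappa> * y)
        = (P * 2 * B powr (1/2-\<beta>) / \<kappa>) * K powr (1/2+\<beta>) * r powr \<beta> / N"
proof -
  have r: "r > 0" unfolding r_def using y N by simp
  have yr: "y = r * N powr (1/2)" unfolding r_def using N by (simp add: powr_half_sqrt)
  have y2: "(y^2) powr (1/2-\<beta>) = r powr (1 - 2*\<beta>) * N powr (1/2-\<beta>)"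
  proof -
    have "y^2 = y powr 2" using powr_realpow[OF y, of 2] by simp
    then have "(y^2) powr (1/2-\<beta>) = y powr (2 * (1/2-\<beta>))" by (simp add: powr_powr)
    also have "2 * (1/2-\<beta>) = 1 - 2*\<beta>" by simp
    finally have "(y^2) powr (1/2-\<beta>) = y powr (1 - 2*\<beta>)" .
    also have "\<dots> = r powr (1 - 2*\<beta>) * (N powr (1/2)) powr (1 - 2*\<beta>)"
      unfolding yr using r N by (simp add: powr_mult)
    also have "(N powr (1/2)) powr (1 - 2*\<beta>) = N powr (1/2 - \<beta>)"
      by (simp add: powr_powr algebra_simps)
    finally show ?thesis .
  qed
  have e1: "r powr (1-\<beta>) / r powr (1 - 2*\<beta>) = r powr \<beta>"
    using r by (simp add: powr_diff[symmetric])
  have e2: "N powr (1/2+\<beta>) * N powr (1/2-\<beta>) = N"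
    using N by (simp add: powr_add[symmetric])
  have fld: "P * (Ka/Na) * (2*y*rb) * (Bc/(rd*Nc)) / (\<kappa>*y) = P*2*Bc/\<kappa> * Ka * (rb/rd) / (Na*Nc)"
    if "y \<noteq> 0" "\<kappa> \<noteq> 0" "rd \<noteq> 0" "Na \<noteq> 0" "Nc \<noteq> 0" for P Ka Na y rb Bc rd Nc \<kappa> :: real
    using that by (simp add: field_simps)
  have "P * (K/N) powr (1/2+\<beta>) * (2*y*r powr (1-\<beta>)) * (B/y^2) powr (1/2-\<beta>) / (\<kappa> * y)
      = P * (K powr (1/2+\<beta>) / N powr (1/2+\<beta>)) * (2*y*r powr (1-\<beta>))
         * (B powr (1/2-\<beta>) / (r powr (1 - 2*\<beta>) * N powr (1/2-\<beta>))) / (\<kappa> * y)"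
    using K N B y by (simp add: powr_divide y2)
  also have "\<dots> = P * 2 * B powr (1/2-\<beta>) / \<kappa> * K powr (1/2+\<beta>) * (r powr (1-\<beta>) / r powr (1 - 2*\<beta>))
         / (N powr (1/2+\<beta>) * N powr (1/2-\<beta>))"
    by (rule fld) (use y kap r N in auto)
  also have "\<dots> = (P * 2 * B powr (1/2-\<beta>) / \<kappa>) * K powr (1/2+\<beta>) * r powr \<beta> / N"
    unfolding e1 e2 ..
  finally show ?thesis .
qed

lemma exp_bound:
  fixes K :: real and N :: nat
  assumes "2 \<le> N" "0 \<le> K" "K / N \<le> 1"
  shows "(1 - K/N)^(N-1) \<le> exp (-K/2)"
proof -
  have "1 - K/N \<le> exp (-K/N)" using exp_ge_add_one_self[of "-K/N"] by simp
  then have "(1 - K/N)^(N-1) \<le> exp (-K/N)^(N-1)"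
    using assms by (intro power_mono) auto
  also have "\<dots> = exp (real (N-1) * (-K/N))" by (rule exp_of_nat_mult[symmetric])
  also have "\<dots> \<le> exp (-K/2)"
  proof -
    have "real N \<le> 2 * real (N-1)" using assms by simp
    then have "K * real N \<le> K * (2 * real (N-1))" using assms by (intro mult_left_mono) auto
    then have "real (N-1) * (-K/N) \<le> -K/2" using assms by (simp add: field_simps)
    then show ?thesis by simp
  qed
  finally show ?thesis .
qed

locale L6 = prob_space M for M :: "'a measure" +
  fixes U :: "nat \<Rightarrow> 'a \<Rightarrow> real" and \<beta> x0 :: real
  assumes meas[measurable]: "\<And>i. U i \<in> borel_measurable M"
    and ind: "indep_vars (\<lambda>_. borel) U UNIV"
    and idist: "\<And>i. distr M borel (U i) = distr M borel (U 0)"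
    and int2: "integrable M (\<lambda>\<omega>. (U 0 \<omega>)^2)"
    and b0: "0 < \<beta>" and b1: "\<beta> < 1/2" and x0pos: "x0 > 0"
    and x0int: "x0 \<in> interior (rv_support M (U 0))"
    and conv: "convex_on {x0..} (\<lambda>x. tail_fun M (U 0) x powr (1/2 - \<beta>))"
begin

abbreviation "Q \<equiv> tail_fun M (U 0)"

lemma order_stat_meas[measurable]:
  assumes "1 \<le> k" "k \<le> N"
  shows "order_stat U N k \<in> borel_measurable M"
proof (rule borel_measurableI_le)
  fix a
  have "{w \<in> space M. order_stat U N k w \<le> a} =
     {w \<in> space M. real k \<le> (\<Sum>i<N. if U i w \<le> a then 1 else 0)}"
  proof (intro Collect_cong conj_cong refl)
    fix w
    show "order_stat U N k w \<le> a \<longleftrightarrow> real k \<le> (\<Sum>i<N. if U i w \<le> a then 1 else 0)"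
      unfolding order_stat_le_iff[OF assms, of U] card_le_sum[symmetric] by simp
  qed
  also have "\<dots> \<in> sets M" by measurable
  finally show "{w \<in> space M. order_stat U N k w \<le> a} \<in> sets M" .
qed

lemma prob_same: "B \<in> sets borel \<Longrightarrow> prob (U i -` B \<inter> space M) = prob (U 0 -` B \<inter> space M)"
  by (metis idist meas measure_distr)

lemma prob_gt: "prob {\<omega>\<in>space M. U i \<omega> > x} = Q x"
proof -
  have "{\<omega>\<in>space M. U i \<omega> > x} = U i -` {x<..} \<inter> space M" by auto
  moreover have "{\<omega>\<in>space M. U 0 \<omega> > x} = U 0 -` {x<..} \<inter> space M" by auto
  ultimately show ?thesis using prob_same[of "{x<..}" i] by (simp add: tail_fun_def)
qed

lemma Q_nonneg: "0 \<le> Q x" by (simp add: tail_fun_def)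
lemma Q_le1: "Q x \<le> 1" by (simp add: tail_fun_def)
lemma Q_mono: "x \<le> y \<Longrightarrow> Q y \<le> Q x"
  unfolding tail_fun_def by (intro finite_measure_mono) auto

lemma Q_cheb: assumes "x > 0" shows "Q x \<le> (\<integral>\<omega>. (U 0 \<omega>)^2 \<partial>M) / x^2"
proof -
  have "Q x \<le> measure M {\<omega>\<in>space M. (U 0 \<omega>)^2 \<ge> x^2}"
    unfolding tail_fun_def using assms
    by (intro finite_measure_mono) (auto intro!: power_mono)
  also have "\<dots> \<le> (\<integral>\<omega>. (U 0 \<omega>)^2 \<partial>M) / x^2"
    by (rule integral_Markov_inequality_measure) (use int2 assms in auto)
  finally show ?thesis .
qed


lemma c_pos: "0 < 1/2 - \<beta>" using b1 by simp

lemma g_cont: "continuous_on {x0<..} (\<lambda>x. Q x powr (1/2 - \<beta>))"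
  by (rule convex_on_continuous) (auto intro: convex_on_subset[OF conv])

lemma Q_eq: "Q x = (Q x powr (1/2 - \<beta>)) powr (1/(1/2 - \<beta>))"
proof (cases "Q x = 0")
  case True then show ?thesis by simp
next
  case False
  then have "Q x > 0" using Q_nonneg[of x] by simp
  then show ?thesis using c_pos by (simp add: powr_powr)
qed

lemma Q_cont: "continuous_on {x0<..} Q"
proof -
  have "continuous_on {x0<..} (\<lambda>x. (Q x powr (1/2 - \<beta>)) powr (1/(1/2 - \<beta>)))"
    by (rule continuous_on_powr') (use g_cont c_pos in \<open>auto intro: continuous_on_const\<close>)
  then show ?thesis using Q_eq by (metis (no_types, lifting) continuous_on_cong)
qed

lemma Q_isCont: "y > x0 \<Longrightarrow> isCont Q y"
  using Q_cont continuous_on_eq_continuous_at[of "{x0<..}" Q] by auto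

lemma prob_ge: assumes "y > x0" shows "prob {\<omega>\<in>space M. U 0 \<omega> \<ge> y} = Q y"
proof -
  define e where "e n = (y - x0) / (real n + 2)" for n :: nat
  have epos: "e n > 0" for n unfolding e_def using assms by auto
  have ele: "e n < y - x0" for n unfolding e_def using assms
    by (auto simp: field_simps intro!: add_less_le_mono mult_right_mono)
  define A where "A n = {\<omega>\<in>space M. U 0 \<omega> > y - e n}" for n
  have emono: "e n \<le> e m" if "m \<le> n" for m n
    unfolding e_def using assms that by (intro divide_left_mono) auto
  have "A n \<subseteq> A m" if "m \<le> n" for m n
    using emono[OF that] by (auto simp: A_def)
  then have dec: "decseq A" unfolding decseq_def by auto
  have e0: "e \<longlonglongrightarrow> 0" unfolding e_def by real_asymp
  have inter: "(\<Inter>n. A n) = {\<omega>\<in>space M. U 0 \<omega> \<ge> y}"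
  proof (intro equalityI subsetI)
    fix w assume w: "w \<in> (\<Inter>n. A n)"
    show "w \<in> {\<omega>\<in>space M. U 0 \<omega> \<ge> y}"
    proof (rule ccontr)
      assume "w \<notin> {\<omega>\<in>space M. U 0 \<omega> \<ge> y}"
      then have "U 0 w < y" "w \<in> space M" using w by (auto simp: A_def)
      then have "eventually (\<lambda>n. e n < y - U 0 w) sequentially"
        using e0 by (intro order_tendstoD) auto
      then obtain n where "e n < y - U 0 w" by (auto dest: eventually_happens)
      moreover have "w \<in> A n" using w by auto
      ultimately show False by (auto simp: A_def)
    qed
  next
    fix w assume "w \<in> {\<omega>\<in>space M. U 0 \<omega> \<ge> y}"
    then have "w \<in> A n" for n using epos[of n] by (auto simp: A_def)
    then show "w \<in> (\<Inter>n. A n)" by auto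
  qed
  have Aeq: "A n = U 0 -` {y - e n<..} \<inter> space M" for n unfolding A_def by auto
  have "A n \<in> sets M" for n unfolding Aeq by (rule measurable_sets[OF meas]) simp
  then have rA: "range A \<subseteq> sets M" by blast
  have l1: "(\<lambda>n. prob (A n)) \<longlonglongrightarrow> prob (\<Inter>n. A n)"
    using finite_Lim_measure_decseq[OF rA dec] .
  have pA: "prob (A n) = Q (y - e n)" for n unfolding A_def tail_fun_def by simp
  have "(\<lambda>n. y - e n) \<longlonglongrightarrow> y - 0" by (rule tendsto_diff[OF tendsto_const e0])
  then have l2: "(\<lambda>n. Q (y - e n)) \<longlonglongrightarrow> Q y"
    by (intro isCont_tendsto_compose[OF Q_isCont[OF assms]]) simp
  have "prob (\<Inter>n. A n) = Q y"
    using LIMSEQ_unique[OF l1] l2 unfolding pA by blast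
  then show ?thesis unfolding inter .
qed


lemma prob_between: assumes "y > x0" "h \<ge> 0"
  shows "prob {\<omega>\<in>space M. y \<le> U 0 \<omega> \<and> U 0 \<omega> \<le> y + h} = Q y - Q (y + h)"
proof -
  have "{\<omega>\<in>space M. y \<le> U 0 \<omega> \<and> U 0 \<omega> \<le> y + h} =
        {\<omega>\<in>space M. U 0 \<omega> \<ge> y} - {\<omega>\<in>space M. U 0 \<omega> > y + h}" by auto
  moreover have "prob ({\<omega>\<in>space M. U 0 \<omega> \<ge> y} - {\<omega>\<in>space M. U 0 \<omega> > y + h})
      = prob {\<omega>\<in>space M. U 0 \<omega> \<ge> y} - prob {\<omega>\<in>space M. U 0 \<omega> > y + h}"
    by (rule finite_measure_Diff) (use assms in auto)
  ultimately show ?thesis using prob_ge[OF assms(1)] by (simp add: tail_fun_def)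
qed

lemma exists_x1: obtains x1 where "x1 > x0" "Q x1 > 0"
proof -
  obtain e where e: "e > 0" "ball x0 e \<subseteq> rv_support M (U 0)"
    using x0int mem_interior by blast
  have "x0 + e/2 \<in> ball x0 e" using e by (simp add: dist_real_def)
  then have "x0 + e/2 \<in> rv_support M (U 0)" using e by blast
  then have pos: "prob {\<omega>\<in>space M. U 0 \<omega> \<in> ball (x0 + e/2) (e/4)} > 0"
    unfolding rv_support_def using e by (auto simp del: mem_ball)
  have "prob {\<omega>\<in>space M. U 0 \<omega> \<in> ball (x0 + e/2) (e/4)} \<le> Q (x0 + e/4)"
    unfolding tail_fun_def
  proof (intro finite_measure_mono)
    show "{\<omega> \<in> space M. U 0 \<omega> \<in> ball (x0 + e / 2) (e / 4)} \<subseteq> {\<omega> \<in> space M. x0 + e / 4 < U 0 \<omega>}"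
      by (auto simp: dist_real_def abs_if split: if_split_asm)
  qed measurable
  then show ?thesis using pos e that[of "x0 + e/4"] by auto
qed

lemma Q_lim0: "(Q \<longlongrightarrow> 0) at_top"
proof (rule tendsto_sandwich[of "\<lambda>_. 0" _ _ "\<lambda>x. (\<integral>\<omega>. (U 0 \<omega>)^2 \<partial>M) / x^2"])
  show "\<forall>\<^sub>F x in at_top. 0 \<le> Q x" by (simp add: Q_nonneg)
  show "\<forall>\<^sub>F x in at_top. Q x \<le> (\<integral>\<omega>. (U 0 \<omega>)^2 \<partial>M) / x^2"
    using eventually_gt_at_top[of 0] by eventually_elim (rule Q_cheb)
  have "((\<lambda>x. C / x^2) \<longlongrightarrow> 0) at_top" for C :: real by real_asymp
  then show "((\<lambda>x. (\<integral>\<omega>. (U 0 \<omega>)^2 \<partial>M) / x^2) \<longlongrightarrow> 0) at_top" .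
qed simp

lemma quantile: assumes "x1 > x0" "0 < q" "q \<le> Q x1"
  obtains t where "t \<ge> x1" "Q t = q"
proof -
  have "eventually (\<lambda>x. Q x < q) at_top" using Q_lim0 assms(2) by (rule order_tendstoD)
  moreover have "eventually (\<lambda>x. x \<ge> x1) at_top" by simp
  ultimately obtain T where T: "Q T < q" "T \<ge> x1"
    using eventually_happens'[of at_top] by (metis (mono_tags, lifting) eventually_conj_iff trivial_limit_at_top_linorder eventually_happens)
  have "\<exists>x. x1 \<le> x \<and> x \<le> T \<and> Q x = q"
    by (rule IVT2) (use T assms Q_isCont in auto)
  then show ?thesis using that by auto
qed


abbreviation "m2 \<equiv> (\<integral>\<omega>. (U 0 \<omega>)^2 \<partial>M)"

lemma m2_nonneg: "m2 \<ge> 0" by simp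

lemma gap_bound:
  assumes x1: "x1 > x0" and y: "x1 \<le> y" and t: "x1 \<le> t" "t \<le> y" and h: "h \<ge> 0"
  shows "Q y - Q (y + h) \<le> (1/(1/2-\<beta>)) * Q t powr (1/2+\<beta>) * h * (4*(m2+1)/y^2) powr (1/2-\<beta>)
            / ((x1-x0)/(2*x1) * y)"
proof -
  define c where "c = 1/2 - \<beta>"
  have c: "0 < c" "c \<le> 1/2" unfolding c_def using b0 b1 by auto
  define g where "g x = Q x powr c" for x
  define a where "a = (x0 + y) / 2"
  define \<kappa> where "\<kappa> = (x1-x0)/(2*x1)"
  have ypos: "y > 0" using x1 y x0pos by simp
  have a: "x0 \<le> a" "a < y" "a > 0" "a \<ge> y/2" unfolding a_def using x1 y x0pos by auto
  have kappa: "\<kappa> > 0" unfolding \<kappa>_def using x1 x0pos by auto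
  have ya: "y - a \<ge> \<kappa> * y"
  proof -
    have "(x1 - x0) * y \<le> (y - x0) * x1" using x1 y x0pos by (simp add: algebra_simps mult_left_mono)
    then show ?thesis unfolding \<kappa>_def a_def using x1 x0pos by (simp add: field_simps)
  qed
  have conv': "convex_on {x0..} g" using conv unfolding g_def c_def .
  have sl: "(y - a) * (g y - g (y + h)) \<le> h * (g a - g y)"
    by (rule convex_slope[OF conv']) (use a h x1 y in auto)
  have gnn: "g x \<ge> 0" for x unfolding g_def by simp
  have gmono: "g (y+h) \<le> g y" unfolding g_def using h Q_mono[of y "y+h"] Q_nonneg
    by (intro powr_mono2) (use c in auto)
  have ga: "g a \<le> (4*(m2+1)/y^2) powr c"
  proof -
    have "Q a \<le> m2 / a^2" by (rule Q_cheb) (use a in auto)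
    also have "\<dots> \<le> (m2+1) / a^2" using a by (simp add: divide_right_mono)
    also have "\<dots> \<le> (m2+1) / (y/2)^2"
      using a ypos by (intro divide_left_mono power_mono) (auto intro: add_nonneg_pos)
    also have "\<dots> = 4*(m2+1)/y^2" by (simp add: field_simps)
    finally show ?thesis unfolding g_def using Q_nonneg c by (intro powr_mono2) auto
  qed
  have "\<kappa> * y * (g y - g (y + h)) \<le> (y - a) * (g y - g (y + h))"
    using ya gmono by (intro mult_right_mono) auto
  also have "\<dots> \<le> h * (g a - g y)" by (rule sl)
  also have "\<dots> \<le> h * (4*(m2+1)/y^2) powr c" using h ga gnn[of y] by (intro mult_left_mono) auto
  finally have gd: "g y - g (y + h) \<le> h * (4*(m2+1)/y^2) powr c / (\<kappa> * y)"
    using kappa ypos by (simp add: field_simps)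
  have Qg: "Q x = g x powr (1/c)" for x unfolding g_def c_def by (rule Q_eq)
  have "Q y - Q (y + h) \<le> (1/c) * g y powr (1/c - 1) * (g y - g (y+h))"
    unfolding Qg by (rule powr_diff_bound) (use gnn gmono c in \<open>auto simp: field_simps\<close>)
  also have "g y powr (1/c - 1) = Q y powr (1/2+\<beta>)"
  proof -
    have "c * (1/c - 1) = 1 - c" using c by (simp add: field_simps)
    also have "\<dots> = 1/2 + \<beta>" unfolding c_def by simp
    finally show ?thesis unfolding g_def by (simp add: powr_powr)
  qed
  finally have A: "Q y - Q (y + h) \<le> (1/c) * Q y powr (1/2+\<beta>) * (g y - g (y+h))" .
  have "Q y powr (1/2+\<beta>) \<le> Q t powr (1/2+\<beta>)"
    using Q_mono[OF t(2)] Q_nonneg b0 by (intro powr_mono2) auto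
  then have "(1/c) * Q y powr (1/2+\<beta>) * (g y - g (y+h)) \<le> (1/c) * Q t powr (1/2+\<beta>) * (h * (4*(m2+1)/y^2) powr c / (\<kappa> * y))"
    using gd gmono c by (intro mult_mono) auto
  with A show ?thesis unfolding c_def \<kappa>_def by (simp add: mult.assoc)
qed


lemma gap_bound2:
  assumes x1: "x1 > x0" and t: "x1 \<le> t" "t \<le> y" and N: "N > 0" and K: "K > 0"
    and Qt: "Q t = K / N" and eps: "\<epsilon> > 0" "y \<le> \<epsilon> * sqrt N"
  shows "Q y - Q (y + 2*y*(y/sqrt N) powr (1-\<beta>)) \<le>
     ((1/(1/2-\<beta>)) * 2 * (4*(m2+1)) powr (1/2-\<beta>) / ((x1-x0)/(2*x1))) * K powr (1/2+\<beta>) * \<epsilon> powr \<beta> / N"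
proof -
  have y: "y > 0" using x1 t x0pos by simp
  have kap: "(x1-x0)/(2*x1) > 0" using x1 x0pos by simp
  have B: "4*(m2+1) > 0" using m2_nonneg by (smt (verit))
  have "Q y - Q (y + 2*y*(y/sqrt N) powr (1-\<beta>)) \<le> (1/(1/2-\<beta>)) * Q t powr (1/2+\<beta>) * (2*y*(y/sqrt N) powr (1-\<beta>))
     * (4*(m2+1)/y^2) powr (1/2-\<beta>) / ((x1-x0)/(2*x1) * y)"
    by (rule gap_bound) (use x1 t y in auto)
  also have "\<dots> = ((1/(1/2-\<beta>)) * 2 * (4*(m2+1)) powr (1/2-\<beta>) / ((x1-x0)/(2*x1))) * K powr (1/2+\<beta>) * (y/sqrt N) powr \<beta> / N"
    unfolding Qt by (rule alg[OF y N K B kap])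
  also have "\<dots> \<le> ((1/(1/2-\<beta>)) * 2 * (4*(m2+1)) powr (1/2-\<beta>) / ((x1-x0)/(2*x1))) * K powr (1/2+\<beta>) * \<epsilon> powr \<beta> / N"
  proof -
    have "y / sqrt N \<le> \<epsilon>" using eps N by (simp add: field_simps)
    then have "(y/sqrt N) powr \<beta> \<le> \<epsilon> powr \<beta>" using y N b0 by (intro powr_mono2) auto
    moreover have "0 \<le> ((1/(1/2-\<beta>)) * 2 * (4*(m2+1)) powr (1/2-\<beta>) / ((x1-x0)/(2*x1))) * K powr (1/2+\<beta>)"
      using kap b1 by (intro mult_nonneg_nonneg divide_nonneg_pos) auto
    ultimately show ?thesis using N by (intro divide_right_mono mult_left_mono) auto
  qed
  finally show ?thesis .
qed


lemma indep_pair: assumes "i \<noteq> j" shows "indep_var borel (U j) borel (U i)"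
proof -
  have "indep_var (PiM {j} (\<lambda>_. borel)) (\<lambda>\<omega>. restrict (\<lambda>k. U k \<omega>) {j})
                  (PiM {i} (\<lambda>_. borel)) (\<lambda>\<omega>. restrict (\<lambda>k. U k \<omega>) {i})"
    by (rule indep_var_restrict[OF ind]) (use assms in auto)
  from indep_var_compose[OF this measurable_component_singleton[of j "{j}"] measurable_component_singleton[of i "{i}"]]
  show ?thesis by (simp add: comp_def)
qed

lemma pair_distr: assumes "i \<noteq> j"
  shows "distr M (borel \<Otimes>\<^sub>M borel) (\<lambda>\<omega>. (U j \<omega>, U i \<omega>)) = distr M borel (U 0) \<Otimes>\<^sub>M distr M borel (U 0)"
proof -
  have "distr M borel (U j) \<Otimes>\<^sub>M distr M borel (U i) = distr M (borel \<Otimes>\<^sub>M borel) (\<lambda>\<omega>. (U j \<omega>, U i \<omega>))"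
    using indep_pair[OF assms] unfolding indep_var_distribution_eq by blast
  then show ?thesis unfolding idist[of i] idist[of j] by simp
qed


lemma pair_bound:
  fixes hh :: "real \<Rightarrow> real"
  assumes ij: "i \<noteq> j" and t: "t > x0" and Bd: "Bd \<ge> 0"
    and hh[measurable]: "hh \<in> borel_measurable borel" and hnn: "\<And>y. t < y \<Longrightarrow> hh y \<ge> 0"
    and bnd: "\<And>y. t < y \<Longrightarrow> y \<le> s \<Longrightarrow> Q y - Q (y + hh y) \<le> Bd"
  shows "prob {\<omega>\<in>space M. t < U j \<omega> \<and> U j \<omega> \<le> s \<and> U j \<omega> \<le> U i \<omega> \<and> U i \<omega> \<le> U j \<omega> + hh (U j \<omega>)}
          \<le> Q t * Bd"
proof -
  define P where "P = distr M borel (U 0)"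
  interpret P: prob_space P unfolding P_def by (rule prob_space_distr) simp
  interpret PP: pair_prob_space P P ..
  define A where "A = {p\<in>space (borel \<Otimes>\<^sub>M borel). t < fst p \<and> fst p \<le> s \<and> fst p \<le> snd p \<and> snd p \<le> fst p + hh (fst p)}"
  have A[measurable]: "A \<in> sets (borel \<Otimes>\<^sub>M borel)" unfolding A_def by measurable
  have ev: "{\<omega>\<in>space M. t < U j \<omega> \<and> U j \<omega> \<le> s \<and> U j \<omega> \<le> U i \<omega> \<and> U i \<omega> \<le> U j \<omega> + hh (U j \<omega>)}
      = (\<lambda>\<omega>. (U j \<omega>, U i \<omega>)) -` A \<inter> space M" unfolding A_def by (auto simp: space_pair_measure)
  have "emeasure M ((\<lambda>\<omega>. (U j \<omega>, U i \<omega>)) -` A \<inter> space M)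
        = emeasure (distr M (borel \<Otimes>\<^sub>M borel) (\<lambda>\<omega>. (U j \<omega>, U i \<omega>))) A"
    by (rule emeasure_distr[symmetric]) auto
  also have "\<dots> = emeasure (P \<Otimes>\<^sub>M P) A" unfolding pair_distr[OF ij] P_def ..
  also have "\<dots> = (\<integral>\<^sup>+y. emeasure P (Pair y -` A) \<partial>P)"
    by (rule P.emeasure_pair_measure_alt) (simp add: P_def)
  also have "\<dots> \<le> (\<integral>\<^sup>+y. ennreal Bd * indicator {t<..} y \<partial>P)"
  proof (rule nn_integral_mono)
    fix y
    show "emeasure P (Pair y -` A) \<le> ennreal Bd * indicator {t<..} y"
    proof (cases "t < y \<and> y \<le> s")
      case True
      then have "Pair y -` A = {x. y \<le> x \<and> x \<le> y + hh y}" unfolding A_def by (auto simp: space_pair_measure)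
      then have "emeasure P (Pair y -` A) = emeasure M (U 0 -` {x. y \<le> x \<and> x \<le> y + hh y} \<inter> space M)"
        unfolding P_def by (simp add: emeasure_distr)
      also have "U 0 -` {x. y \<le> x \<and> x \<le> y + hh y} \<inter> space M = {\<omega>\<in>space M. y \<le> U 0 \<omega> \<and> U 0 \<omega> \<le> y + hh y}"
        by auto
      also have "emeasure M {\<omega>\<in>space M. y \<le> U 0 \<omega> \<and> U 0 \<omega> \<le> y + hh y} = ennreal (Q y - Q (y + hh y))"
        using prob_between[of y "hh y"] True t hnn[of y] by (simp add: emeasure_eq_measure)
      also have "\<dots> \<le> ennreal Bd" using bnd True by (intro ennreal_leI) auto
      finally show ?thesis using True by simp
    next
      case False
      then have "Pair y -` A = {}" unfolding A_def by auto
      then show ?thesis by simp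
    qed
  qed
  also have "\<dots> = ennreal Bd * emeasure P {t<..}"
    by (rule nn_integral_cmult_indicator) (simp add: P_def)
  also have "emeasure P {t<..} = ennreal (Q t)"
    unfolding P_def by (simp add: emeasure_distr emeasure_eq_measure tail_fun_def vimage_def Int_def conj_commute)
  finally have "emeasure M ((\<lambda>\<omega>. (U j \<omega>, U i \<omega>)) -` A \<inter> space M) \<le> ennreal (Q t * Bd)"
    using Bd Q_nonneg[of t] by (simp add: ennreal_mult mult.commute)
  then show ?thesis unfolding ev using Bd Q_nonneg[of t]
    by (simp add: emeasure_eq_measure ennreal_le_iff)
qed


lemma prob_le: "prob (U k -` {..t} \<inter> space M) = 1 - Q t"
proof -
  have "U k -` {..t} \<inter> space M = space M - {\<omega>\<in>space M. U k \<omega> > t}" by auto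
  then show ?thesis using prob_compl[of "{\<omega>\<in>space M. U k \<omega> > t}"] prob_gt[where i=k and x=t] by simp
qed

lemma prob_gt': "prob (U k -` {t<..} \<inter> space M) = Q t"
proof -
  have "U k -` {t<..} \<inter> space M = {\<omega>\<in>space M. U k \<omega> > t}" by auto
  then show ?thesis using prob_gt[where i=k and x=t] by simp
qed

lemma count_bound:
  assumes N: "2 \<le> N"
  shows "prob {\<omega>\<in>space M. order_stat U N (N-1) \<omega> \<le> t} \<le> (1 - Q t)^(N-1) * (1 + N * Q t)"
proof -
  define q where "q = Q t"
  have q: "0 \<le> q" "q \<le> 1" unfolding q_def using Q_nonneg Q_le1 by auto
  define Aall where "Aall = (\<Inter>k\<in>{..<N}. U k -` {..t} \<inter> space M)"
  define B where "B i = (\<Inter>k\<in>{..<N}. U k -` (if k = i then {t<..} else {..t}) \<inter> space M)" for i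
  have Aall_sets: "Aall \<in> sets M" unfolding Aall_def using N
    by (intro sets.finite_INT) (auto intro: measurable_sets[OF meas] simp: lessThan_empty_iff)
  have B_sets: "B i \<in> sets M" for i unfolding B_def using N
    by (intro sets.finite_INT) (auto intro: measurable_sets[OF meas] simp: lessThan_empty_iff)
  have pAall: "prob Aall = (1 - q)^N"
  proof -
    have "prob Aall = (\<Prod>k\<in>{..<N}. prob (U k -` {..t} \<inter> space M))"
      unfolding Aall_def by (rule indep_varsD[OF ind]) (use N in \<open>auto simp: lessThan_empty_iff\<close>)
    also have "\<dots> = (1 - q)^N" unfolding prob_le q_def by simp
    finally show ?thesis .
  qed
  have pB: "prob (B i) = q * (1 - q)^(N-1)" if i: "i < N" for i
  proof -
    have "prob (B i) = (\<Prod>k\<in>{..<N}. prob (U k -` (if k = i then {t<..} else {..t}) \<inter> space M))"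
      unfolding B_def by (rule indep_varsD[OF ind]) (use N in \<open>auto simp: lessThan_empty_iff\<close>)
    also have "\<dots> = (\<Prod>k\<in>{..<N}. if k = i then q else 1 - q)"
      by (intro prod.cong refl) (simp add: prob_le prob_gt' q_def)
    also have "\<dots> = q * (\<Prod>k\<in>{..<N} - {i}. if k = i then q else 1 - q)"
      using i by (subst prod.remove[of _ i]) auto
    also have "(\<Prod>k\<in>{..<N} - {i}. if k = i then q else 1 - q) = (\<Prod>k\<in>{..<N} - {i}. 1 - q)"
      by (intro prod.cong) auto
    also have "\<dots> = (1 - q)^(N-1)" using i by simp
    finally show ?thesis .
  qed
  have incl: "{\<omega>\<in>space M. order_stat U N (N-1) \<omega> \<le> t} \<subseteq> Aall \<union> (\<Union>i\<in>{..<N}. B i)"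
  proof
    fix w assume w: "w \<in> {\<omega>\<in>space M. order_stat U N (N-1) \<omega> \<le> t}"
    then have c: "N - 1 \<le> card {i. i < N \<and> U i w \<le> t}" and ws: "w \<in> space M"
      using order_stat_le_iff[of "N-1" N U w t] N by auto
    show "w \<in> Aall \<union> (\<Union>i\<in>{..<N}. B i)"
    proof (cases "\<forall>k<N. U k w \<le> t")
      case True then show ?thesis using ws unfolding Aall_def by auto
    next
      case False
      then obtain i where i: "i < N" "U i w > t" by (auto simp: not_le)
      have sub: "{i. i < N \<and> U i w \<le> t} \<subseteq> {..<N} - {i}" using i by auto
      have cN: "card ({..<N} - {i}) = N - 1" using i by simp
      have "card {i. i < N \<and> U i w \<le> t} \<le> card ({..<N} - {i})"
        by (rule card_mono[OF _ sub]) auto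
      then have "{i. i < N \<and> U i w \<le> t} = {..<N} - {i}"
        using c cN by (intro card_subset_eq[OF _ sub]) auto
      then have "\<forall>k<N. k \<noteq> i \<longrightarrow> U k w \<le> t" by auto
      then have "w \<in> B i" using i ws unfolding B_def by auto
      then show ?thesis using i by auto
    qed
  qed
  have "prob {\<omega>\<in>space M. order_stat U N (N-1) \<omega> \<le> t} \<le> prob (Aall \<union> (\<Union>i\<in>{..<N}. B i))"
    by (rule finite_measure_mono[OF incl]) (use Aall_sets B_sets in auto)
  also have "\<dots> \<le> prob Aall + prob (\<Union>i\<in>{..<N}. B i)"
    by (rule measure_Un_le) (use Aall_sets B_sets in auto)
  also have "prob (\<Union>i\<in>{..<N}. B i) \<le> (\<Sum>i\<in>{..<N}. prob (B i))"
    by (rule measure_UNION_le) (use B_sets in auto)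
  also have "(\<Sum>i\<in>{..<N}. prob (B i)) = N * (q * (1 - q)^(N-1))"
    using pB by simp
  also have "prob Aall \<le> (1 - q)^(N-1)"
    unfolding pAall using q N by (intro power_decreasing) auto
  finally show ?thesis unfolding q_def[symmetric] by (simp add: algebra_simps)
qed


lemma tail_markov: assumes s: "s > 0"
  shows "s^2 * Q s \<le> (\<integral>\<omega>. (U 0 \<omega>)^2 * indicator {s<..} (U 0 \<omega>) \<partial>M)"
proof -
  have int: "integrable M (\<lambda>\<omega>. (U 0 \<omega>)^2 * indicator {s<..} (U 0 \<omega>))"
    by (rule Bochner_Integration.integrable_bound[OF int2]) (auto simp: indicator_def)
  have "Q s \<le> measure M {\<omega>\<in>space M. (U 0 \<omega>)^2 * indicator {s<..} (U 0 \<omega>) \<ge> s^2}"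
    unfolding tail_fun_def using s
    by (intro finite_measure_mono) (auto intro!: power_mono simp: indicator_def)
  also have "\<dots> \<le> (\<integral>\<omega>. (U 0 \<omega>)^2 * indicator {s<..} (U 0 \<omega>) \<partial>M) / s^2"
    by (rule integral_Markov_inequality_measure[OF int]) (use s in \<open>auto simp: indicator_def\<close>)
  finally show ?thesis using s by (simp add: field_simps)
qed

lemma tail_lim: assumes eps: "\<epsilon> > 0"
  shows "(\<lambda>N. real N * Q (\<epsilon> * sqrt (real N))) \<longlonglongrightarrow> 0"
proof -
  define s where "s N = \<epsilon> * sqrt (real N)" for N :: nat
  have slim: "filterlim s at_top sequentially" unfolding s_def using eps by real_asymp
  define F where "F N = (\<integral>\<omega>. (U 0 \<omega>)^2 * indicator {s N<..} (U 0 \<omega>) \<partial>M)" for N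
  have F0: "F \<longlonglongrightarrow> (\<integral>\<omega>. 0 \<partial>M)" unfolding F_def
  proof (rule integral_dominated_convergence[where w="\<lambda>\<omega>. (U 0 \<omega>)^2"])
    show "AE \<omega> in M. (\<lambda>N. (U 0 \<omega>)^2 * indicator {s N<..} (U 0 \<omega>)) \<longlonglongrightarrow> 0"
    proof (rule AE_I2)
      fix \<omega>
      have "eventually (\<lambda>N. s N > U 0 \<omega>) sequentially"
        using slim by (simp add: filterlim_at_top_dense)
      then have "eventually (\<lambda>N. (U 0 \<omega>)^2 * indicator {s N<..} (U 0 \<omega>) = (0::real)) sequentially"
        by eventually_elim (auto simp: indicator_def)
      then show "(\<lambda>N. (U 0 \<omega>)^2 * indicator {s N<..} (U 0 \<omega>)) \<longlonglongrightarrow> 0"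
        by (rule tendsto_eventually)
    qed
    show "\<And>N. AE \<omega> in M. norm ((U 0 \<omega>)^2 * indicator {s N<..} (U 0 \<omega>)) \<le> (U 0 \<omega>)^2"
      by (auto simp: indicator_def)
  qed (use int2 in auto)
  have "(\<lambda>N. F N / \<epsilon>^2) \<longlonglongrightarrow> 0 / \<epsilon>^2" using F0 eps by (intro tendsto_divide) auto
  then have Fl: "(\<lambda>N. F N / \<epsilon>^2) \<longlonglongrightarrow> 0" by simp
  show ?thesis
  proof (rule tendsto_sandwich[OF _ _ tendsto_const Fl])
    show "\<forall>\<^sub>F N in sequentially. 0 \<le> real N * Q (\<epsilon> * sqrt (real N))" using Q_nonneg by simp
    show "\<forall>\<^sub>F N in sequentially. real N * Q (\<epsilon> * sqrt (real N)) \<le> F N / \<epsilon>^2"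
      using eventually_gt_at_top[of "0::nat"]
    proof eventually_elim
      case (elim N)
      have sp: "s N > 0" unfolding s_def using eps elim by simp
      have "(s N)^2 = \<epsilon>^2 * real N" unfolding s_def by (simp add: power_mult_distrib)
      then have "\<epsilon>^2 * (real N * Q (s N)) \<le> F N"
        using tail_markov[OF sp] unfolding F_def by (simp add: mult.assoc)
      then show ?case using eps unfolding s_def by (simp add: field_simps)
    qed
  qed
qed


lemma main:
  "(\<lambda>N. prob {\<omega> \<in> space M.
            order_stat U N (N - 1) \<omega> \<le> order_stat U N N \<omega> *
              (1 - (order_stat U N (N - 1) \<omega> / sqrt (real N)) powr (1 - \<beta>))})
         \<longlonglongrightarrow> 1"
proof -
  obtain x1 where x1: "x1 > x0" "Q x1 > 0" by (rule exists_x1)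
  define Cst where "Cst = (1/(1/2-\<beta>)) * 2 * (4*(m2+1)) powr (1/2-\<beta>) / ((x1-x0)/(2*x1))"
  have Cst: "Cst \<ge> 0" unfolding Cst_def using x1 x0pos b1
    by (intro mult_nonneg_nonneg divide_nonneg_pos) auto
  show ?thesis
  proof (rule tendstoI)
    fix \<eta> :: real assume eta: "\<eta> > 0"
    have "((\<lambda>K::real. exp(-K/2)*(1+K)) \<longlongrightarrow> 0) at_top" by real_asymp
    then have "eventually (\<lambda>K. exp(-K/2)*(1+K) < \<eta>/3) at_top"
      using eta by (intro order_tendstoD) auto
    moreover have "eventually (\<lambda>K::real. K \<ge> 1) at_top" by simp
    ultimately have "eventually (\<lambda>K. K \<ge> 1 \<and> exp(-K/2)*(1+K) < \<eta>/3) at_top"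
      by eventually_elim auto
    then obtain K0 where K0: "\<And>K. K \<ge> K0 \<Longrightarrow> K \<ge> 1 \<and> exp(-K/2)*(1+K) < \<eta>/3"
      unfolding eventually_at_top_linorder by blast
    obtain K where K: "K \<ge> 1" "exp(-K/2)*(1+K) < \<eta>/3" using K0[of K0] by blast
    define D where "D = K * Cst * K powr (1/2+\<beta>)"
    have D: "D \<ge> 0" unfolding D_def using K Cst by simp
    define \<epsilon> where "\<epsilon> = min (1/4) ((\<eta>/(3*(D+1))) powr (1/\<beta>))"
    have epos: "\<epsilon> > 0" unfolding \<epsilon>_def using eta D by simp
    have ele: "\<epsilon> \<le> 1/4" unfolding \<epsilon>_def by simp
    have De: "D * \<epsilon> powr \<beta> < \<eta>/3"
    proof -
      have "\<epsilon> powr \<beta> \<le> ((\<eta>/(3*(D+1))) powr (1/\<beta>)) powr \<beta>"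
        unfolding \<epsilon>_def using b0 epos by (intro powr_mono2) (auto simp: \<epsilon>_def)
      also have "\<dots> = \<eta>/(3*(D+1))" using b0 eta D by (simp add: powr_powr)
      finally have "D * \<epsilon> powr \<beta> \<le> D * (\<eta>/(3*(D+1)))" using D by (intro mult_left_mono) auto
      also have "\<dots> < \<eta>/3" using D eta by (simp add: field_simps)
      finally show ?thesis .
    qed
    have ev1: "eventually (\<lambda>N::nat. 2 \<le> N) sequentially" by simp
    have ev2: "eventually (\<lambda>N::nat. K / real N \<le> Q x1) sequentially"
    proof -
      have "((\<lambda>N::nat. K / real N) \<longlongrightarrow> 0) sequentially" by real_asymp
      then have "eventually (\<lambda>N::nat. K / real N < Q x1) sequentially"
        using x1(2) by (rule order_tendstoD(2))
      then show ?thesis by eventually_elim simp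
    qed
    have ev3: "eventually (\<lambda>N. real N * Q (\<epsilon> * sqrt (real N)) < \<eta>/3) sequentially"
      using tail_lim[OF epos] eta by (intro order_tendstoD) auto
    show "eventually (\<lambda>N. dist (prob {\<omega> \<in> space M.
            order_stat U N (N - 1) \<omega> \<le> order_stat U N N \<omega> *
              (1 - (order_stat U N (N - 1) \<omega> / sqrt (real N)) powr (1 - \<beta>))}) 1 < \<eta>) sequentially"
      using ev1 ev2 ev3
    proof eventually_elim
      case (elim N)
      note N2 = elim(1)
      have Npos: "real N > 0" using N2 by simp
      have qpos: "0 < K / real N" using K Npos by simp
      obtain t where t: "x1 \<le> t" "Q t = K / real N"
        using quantile[OF x1(1) qpos elim(2)] by blast
      define s where "s = \<epsilon> * sqrt (real N)"
      define hh where "hh y = 2*y*(y/sqrt (real N)) powr (1-\<beta>)" for y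
      define Bd where "Bd = Cst * K powr (1/2+\<beta>) * \<epsilon> powr \<beta> / real N"
      have Bd: "Bd \<ge> 0" unfolding Bd_def using Cst Npos by simp
      define V1 where "V1 = order_stat U N N"
      define V2 where "V2 = order_stat U N (N-1)"
      have [measurable]: "V1 \<in> borel_measurable M" "V2 \<in> borel_measurable M"
        unfolding V1_def V2_def using N2 by (auto intro: order_stat_meas)
      define Ds where "Ds = {\<omega> \<in> space M. V2 \<omega> \<le> V1 \<omega> * (1 - (V2 \<omega> / sqrt (real N)) powr (1 - \<beta>))}"
      have Ds_sets: "Ds \<in> sets M" unfolding Ds_def by measurable
      define I where "I = {p. fst p < N \<and> snd p < N \<and> fst p \<noteq> snd p}"
      have I_sub: "I \<subseteq> {..<N} \<times> {..<N}" unfolding I_def by auto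
      have I_fin: "finite I" using I_sub finite_subset by blast
      have I_card: "card I \<le> N * N" using card_mono[OF _ I_sub] by simp
      define A where "A p = {\<omega>\<in>space M. t < U (snd p) \<omega> \<and> U (snd p) \<omega> \<le> s \<and> U (snd p) \<omega> \<le> U (fst p) \<omega>
                   \<and> U (fst p) \<omega> \<le> U (snd p) \<omega> + hh (U (snd p) \<omega>)}" for p
      define G1 where "G1 = {\<omega>\<in>space M. V2 \<omega> \<le> t}"
      define G2 where "G2 = (\<Union>i\<in>{..<N}. {\<omega>\<in>space M. U i \<omega> > s})"
      define G3 where "G3 = (\<Union>p\<in>I. A p)"
      have hh_meas[measurable]: "hh \<in> borel_measurable borel" unfolding hh_def by measurable
      have A_sets: "A p \<in> sets M" for p unfolding A_def by measurable
      have G1_sets: "G1 \<in> sets M" unfolding G1_def by measurable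
      have G2_sets: "G2 \<in> sets M" unfolding G2_def by measurable
      have G3_sets: "G3 \<in> sets M" unfolding G3_def using I_fin A_sets by auto
      have incl: "space M - Ds \<subseteq> G1 \<union> G2 \<union> G3"
      proof
        fix w assume w: "w \<in> space M - Ds"
        show "w \<in> G1 \<union> G2 \<union> G3"
        proof (rule ccontr)
          assume nG: "w \<notin> G1 \<union> G2 \<union> G3"
          have ws: "w \<in> space M" using w by simp
          have nD: "\<not> (V2 w \<le> V1 w * (1 - (V2 w / sqrt (real N)) powr (1 - \<beta>)))"
            using w unfolding Ds_def by simp
          have V2t: "V2 w > t" using nG ws unfolding G1_def by auto
          have Us: "U k w \<le> s" if "k < N" for k
          proof -
            have "w \<notin> G2" using nG by simp
            then have "\<not> s < U k w" using ws that unfolding G2_def by blast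
            then show ?thesis by simp
          qed
          obtain i j where ij: "i < N" "j < N" "i \<noteq> j" "V1 w = U i w" "V2 w = U j w" "U j w \<le> U i w"
            using order_stat_indices[OF N2, of U w] unfolding V1_def V2_def by blast
          define r where "r = (V2 w / sqrt (real N)) powr (1 - \<beta>)"
          have V2pos: "V2 w > 0" using V2t t x1 x0pos by simp
          have rnn: "r \<ge> 0" unfolding r_def by simp
          have "V2 w \<le> s" using Us[OF ij(2)] ij(5) by simp
          then have "V2 w / sqrt (real N) \<le> \<epsilon>" unfolding s_def using Npos by (simp add: field_simps)
          then have "V2 w / sqrt (real N) \<le> 1/4" using ele by linarith
          then have "r \<le> (1/4) powr (1 - \<beta>)" unfolding r_def using V2pos Npos b1
            by (intro powr_mono2) auto
          also have "\<dots> \<le> (1/4) powr (1/2)" using b1 by (intro powr_mono') auto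
          also have "(1/4::real) powr (1/2) = 1/2" by (simp add: powr_half_sqrt real_sqrt_divide)
          finally have rle: "r \<le> 1/2" .
          have lt: "V1 w * (1 - r) < V2 w" using nD unfolding r_def by simp
          have V12: "V1 w \<le> 2 * V2 w"
          proof (rule ccontr)
            assume "\<not> V1 w \<le> 2 * V2 w"
            then have "V1 w > 2 * V2 w" by simp
            then have "V1 w * (1/2) \<le> V1 w * (1 - r)" using rle V2pos by (intro mult_left_mono) auto
            then show False using lt \<open>V1 w > 2 * V2 w\<close> by simp
          qed
          have "V1 w - V2 w < V1 w * r" using lt by (simp add: algebra_simps)
          also have "\<dots> \<le> 2 * V2 w * r" using V12 rnn by (intro mult_right_mono) auto
          finally have "U i w \<le> U j w + hh (U j w)" unfolding hh_def r_def using ij(4,5) by simp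
          then have "w \<in> A (i, j)" unfolding A_def using ws ij V2t Us[OF ij(2)] by auto
          moreover have "(i, j) \<in> I" unfolding I_def using ij by simp
          ultimately have "w \<in> G3" unfolding G3_def by blast
          then show False using nG by simp
        qed
      qed
      have p1: "prob G1 \<le> exp(-K/2)*(1+K)"
      proof -
        have "prob G1 \<le> (1 - Q t)^(N-1) * (1 + N * Q t)"
          unfolding G1_def V2_def by (rule count_bound[OF N2])
        also have "\<dots> = (1 - K/N)^(N-1) * (1 + K)" using Npos t(2) by simp
        also have "\<dots> \<le> exp(-K/2) * (1 + K)"
          using exp_bound[OF N2, of K] K elim(2) Q_le1[of x1] by (intro mult_right_mono) auto
        finally show ?thesis .
      qed
      have p2: "prob G2 \<le> real N * Q s"
      proof -
        have "prob G2 \<le> (\<Sum>i\<in>{..<N}. prob {\<omega>\<in>space M. U i \<omega> > s})"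
          unfolding G2_def by (rule measure_UNION_le) auto
        also have "\<dots> = real N * Q s" by (simp add: prob_gt)
        finally show ?thesis .
      qed
      have p3: "prob G3 \<le> D * \<epsilon> powr \<beta>"
      proof -
        have pA: "prob (A p) \<le> Q t * Bd" if "p \<in> I" for p
          unfolding A_def
        proof (rule pair_bound)
          show "fst p \<noteq> snd p" using that unfolding I_def by auto
          show "x0 < t" using x1 t by simp
          show "0 \<le> Bd" by (rule Bd)
          show "hh \<in> borel_measurable borel" by (rule hh_meas)
          show "0 \<le> hh y" if "t < y" for y
            unfolding hh_def using that x1 t x0pos by simp
          show "Q y - Q (y + hh y) \<le> Bd" if "t < y" "y \<le> s" for y
            unfolding hh_def Bd_def Cst_def
            by (rule gap_bound2[OF x1(1) t(1) _ Npos _ t(2) epos]) (use that K in \<open>auto simp: s_def\<close>)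
        qed
        have "prob G3 \<le> (\<Sum>p\<in>I. prob (A p))"
          unfolding G3_def by (rule measure_UNION_le[OF I_fin]) (rule A_sets)
        also have "\<dots> \<le> (\<Sum>p\<in>I. Q t * Bd)" by (intro sum_mono pA)
        also have "\<dots> = card I * (Q t * Bd)" by simp
        also have "\<dots> \<le> (N * N) * (Q t * Bd)"
          using I_card Bd Q_nonneg[of t] by (intro mult_right_mono) (auto simp del: of_nat_mult simp: of_nat_mult[symmetric])
        also have "\<dots> = D * \<epsilon> powr \<beta>"
          unfolding t(2) Bd_def D_def using Npos by (simp add: field_simps)
        finally show ?thesis .
      qed
      have "prob (space M - Ds) \<le> prob (G1 \<union> G2 \<union> G3)"
        by (rule finite_measure_mono[OF incl]) (use G1_sets G2_sets G3_sets in auto)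
      also have "\<dots> \<le> prob G1 + prob G2 + prob G3"
        using measure_Un_le[where M=M and A="G1 \<union> G2" and B=G3] measure_Un_le[where M=M and A=G1 and B=G2] G1_sets G2_sets G3_sets by auto
      also have "\<dots> < \<eta>" using p1 p2 p3 K De elim(3) unfolding s_def by linarith
      finally have "prob (space M - Ds) < \<eta>" .
      then have "dist (prob Ds) 1 < \<eta>"
        using prob_compl[OF Ds_sets] prob_le_1[of Ds] by (simp add: dist_real_def)
      then show ?case unfolding Ds_def V1_def V2_def .
    qed
  qed
qed

end

theorem lemma6:
  fixes M :: "'a measure" and U :: "nat \<Rightarrow> 'a \<Rightarrow> real"
    and \<beta> x0 :: real
  assumes "prob_space M"
    and "\<And>i. U i \<in> borel_measurable M"
    and "prob_space.indep_vars M (\<lambda>_. borel) U UNIV"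
    and "\<And>i. distr M borel (U i) = distr M borel (U 0)"
    and "\<And>i. AE \<omega> in M. U i \<omega> > 0"
    and "integrable M (\<lambda>\<omega>. (U 0 \<omega>)^2)"
    and "0 < \<beta>" and "\<beta> < 1/2"
    and "x0 > 0" and "x0 \<in> interior (rv_support M (U 0))"
    and "convex_on {x0..} (\<lambda>x. tail_fun M (U 0) x powr (1/2 - \<beta>))"
  shows "(\<lambda>N. measure M {\<omega> \<in> space M.
            order_stat U N (N - 1) \<omega> \<le> order_stat U N N \<omega> *
              (1 - (order_stat U N (N - 1) \<omega> / sqrt (real N)) powr (1 - \<beta>))})
         \<longlonglongrightarrow> 1"
proof -
  interpret L6 M U \<beta> x0
    by (rule L6.intro[OF assms(1)], unfold_locales) (use assms in auto)
  show ?thesis by (rule main)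
qed

end
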